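(* In the one-dimensional perturbed elephant random walk with stops, suppose $\epsilon+r\neq1$ and $\gamma=\frac{1+\epsilon r}{2}$. Then for all $t\ge1$ $$\mathbb{E}[X_t^2]=-\frac{t}{r(\epsilon+r)}-\frac{r\,\Gamma(t+1-\epsilon-r)}{(\epsilon+r)(\epsilon+r+\epsilon r)\Gamma(1-\epsilon-r)\Gamma(t)}+\frac{1}{\Gamma(1+\epsilon r)}\Big[\frac{1}{r(\epsilon+r)}+\frac{r}{(\epsilon+r)(\epsilon+r+\epsilon r)}\Big]\frac{\Gamma(t+1+\epsilon r)}{\Gamma(t)},$$ and hence $$\lim_{t\to\infty}\frac{\mathbb{E}[X_t^2]}{t^{1+\epsilon r}}=\frac{1}{\Gamma(1+\epsilon r)}\Big[\frac{1}{r(\epsilon+r)}+\frac{r}{(\epsilon+r)(\epsilon+r+\epsilon r)}\Big].$$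
   Context: One-dimensional perturbed elephant random walk with stops (perturbed ERWS): fix $p,q,r\in(0,1)$ with $p+q+r=1$, $\epsilon\in(0,1)$ and $s\in(0,1)$, and set $\gamma=p-q$. The steps $\sigma_1,\sigma_2,\dots$ take values in $\{-1,0,1\}$, $X_0=0$ and $X_t=\sigma_1+\dots+\sigma_t$. The first step satisfies $P(\sigma_1=1)=s$, $P(\sigma_1=-1)=1-s$. For $t\ge1$, conditionally on $\sigma_1,\dots,\sigma_t$, an index $k\in\{1,\dots,t\}$ is chosen uniformly at random. If $\sigma_k=\pm1$, then $\sigma_{t+1}=\sigma_k$ with probability $p$, $\sigma_{t+1}=-\sigma_k$ with probability $q$, and $\sigma_{t+1}=0$ with probability $r$. If $\sigma_k=0$, then $\sigma_{t+1}=1$ with probability $\epsilon/2$, $\sigma_{t+1}=-1$ with probability $\epsilon/2$, and $\sigma_{t+1}=0$ with probability $1-\epsilon$. *)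

theory Defs
  imports "HOL-Probability.Probability"
begin

text \<open>Conditional law of the next step sigma_{t+1}, given that the uniformly chosen
  remembered step is c (c in {-1,0,1}).\<close>
definition erws_next :: "real \<Rightarrow> real \<Rightarrow> real \<Rightarrow> real \<Rightarrow> int \<Rightarrow> int pmf" where
  "erws_next p q r eps c =
     (if c \<noteq> 0 then pmf_of_list [(c, p), (-c, q), (0, r)]
      else pmf_of_list [(1, eps/2), (-1, eps/2), (0, 1 - eps)])"

fun erws_steps :: "real \<Rightarrow> real \<Rightarrow> real \<Rightarrow> real \<Rightarrow> real \<Rightarrow> nat \<Rightarrow> int list pmf" where
  "erws_steps p q r eps s 0 = return_pmf []"
| "erws_steps p q r eps s (Suc 0) =
     map_pmf (\<lambda>b. [if b then 1 else -1]) (bernoulli_pmf s)"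
| "erws_steps p q r eps s (Suc (Suc n)) =
     bind_pmf (erws_steps p q r eps s (Suc n)) (\<lambda>xs.
       map_pmf (\<lambda>y. xs @ [y])
         (bind_pmf (pmf_of_set {0..<length xs}) (\<lambda>k. erws_next p q r eps (xs ! k))))"

definition erws_second_moment :: "real \<Rightarrow> real \<Rightarrow> real \<Rightarrow> real \<Rightarrow> real \<Rightarrow> nat \<Rightarrow> real" where
  "erws_second_moment p q r eps s t =
     measure_pmf.expectation (erws_steps p q r eps s t) (\<lambda>xs. (real_of_int (sum_list xs))\<^sup>2)"

end

theory Submission
  imports Defs
begin


definition L :: "nat \<Rightarrow> int list set" where
  "L n = {xs. set xs \<subseteq> {-1,0,1} \<and> length xs = n}"

lemma finite_L: "finite (L n)"
  unfolding L_def using finite_lists_length_eq[of "{-1,0,1::int}" n] by simp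

lemma wf1: "(p::real) \<ge> 0 \<Longrightarrow> q \<ge> 0 \<Longrightarrow> r \<ge> 0 \<Longrightarrow> p+q+r = 1 \<Longrightarrow> pmf_of_list_wf [(c, p), (-c, q), (0, r)]"
  by (auto simp: pmf_of_list_wf_def)

lemma wf2: "0 \<le> (eps::real) \<Longrightarrow> eps \<le> 1 \<Longrightarrow> pmf_of_list_wf [(1::int, eps/2), (-1, eps/2), (0, 1 - eps)]"
  by (auto simp: pmf_of_list_wf_def)

lemma next_supp:
  assumes "p \<ge> 0" "q \<ge> 0" "r \<ge> 0" "p+q+r = 1" "0 \<le> eps" "eps \<le> 1" "c \<in> {-1,0,1}"
  shows "set_pmf (erws_next p q r eps c) \<subseteq> {-1,0,1}"
proof (cases "c = 0")
  case True
  then show ?thesis using set_pmf_of_list[OF wf2[OF assms(5,6)]] by (auto simp: erws_next_def)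
next
  case False
  then show ?thesis using set_pmf_of_list[OF wf1[OF assms(1-4), of c]] assms(7) by (auto simp: erws_next_def)
qed

lemma next_fin:
  assumes "p \<ge> 0" "q \<ge> 0" "r \<ge> 0" "p+q+r = 1" "0 \<le> eps" "eps \<le> 1"
  shows "finite (set_pmf (erws_next p q r eps c))"
proof (cases "c = 0")
  case True
  then show ?thesis using finite_set_pmf_of_list[OF wf2[OF assms(5,6)]] by (auto simp: erws_next_def)
next
  case False
  then show ?thesis using finite_set_pmf_of_list[OF wf1[OF assms(1-4), of c]] by (auto simp: erws_next_def)
qed

lemma next_exp1:
  assumes "p \<ge> 0" "q \<ge> 0" "r \<ge> 0" "p+q+r = 1" "c \<noteq> 0"
  shows "measure_pmf.expectation (erws_next p q r eps c) f = p * f c + q * f (-c) + r * f 0"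
proof -
  have w: "pmf_of_list_wf [(c, p), (-c, q), (0, r)]" using wf1 assms by blast
  have e: "erws_next p q r eps c = pmf_of_list [(c, p), (-c, q), (0, r)]"
    using assms(5) by (simp add: erws_next_def)
  have "measure_pmf.expectation (erws_next p q r eps c) f
      = (\<Sum>a\<in>{c,-c,0}. f a * pmf (pmf_of_list [(c, p), (-c, q), (0, r)]) a)"
    unfolding e by (intro integral_measure_pmf_real) (use set_pmf_of_list[OF w] in auto)
  also have "\<dots> = p * f c + q * f (-c) + r * f 0"
    using assms(5) by (simp add: pmf_pmf_of_list[OF w])
  finally show ?thesis .
qed

lemma next_exp0:
  assumes "0 \<le> eps" "eps \<le> 1"
  shows "measure_pmf.expectation (erws_next p q r eps 0) f = eps/2 * f 1 + eps/2 * f (-1) + (1-eps) * f 0"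
proof -
  have w: "pmf_of_list_wf [(1::int, eps/2), (-1, eps/2), (0, 1 - eps)]" using wf2 assms by blast
  have e: "erws_next p q r eps 0 = pmf_of_list [(1::int, eps/2), (-1, eps/2), (0, 1 - eps)]"
    by (simp add: erws_next_def)
  have "measure_pmf.expectation (erws_next p q r eps 0) f
      = (\<Sum>a\<in>{1,-1,0}. f a * pmf (pmf_of_list [(1::int, eps/2), (-1, eps/2), (0, 1 - eps)]) a)"
    unfolding e by (intro integral_measure_pmf_real) (use set_pmf_of_list[OF w] in auto)
  also have "\<dots> = eps/2 * f 1 + eps/2 * f (-1) + (1-eps) * f 0"
    by (simp add: pmf_pmf_of_list[OF w] algebra_simps)
  finally show ?thesis .
qed

lemma supp:
  assumes "p \<ge> 0" "q \<ge> 0" "r \<ge> 0" "p+q+r = 1" "0 \<le> eps" "eps \<le> 1"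
  shows "set_pmf (erws_steps p q r eps s n) \<subseteq> L n"
  using assms
proof (induction p q r eps s n rule: erws_steps.induct)
  case (1 p q r eps s)
  then show ?case by (simp add: L_def)
next
  case (2 p q r eps s)
  then show ?case by (auto simp: L_def split: if_splits)
next
  case (3 p' q' r' eps' s' n)
  show ?case
  proof
    fix ys assume "ys \<in> set_pmf (erws_steps p' q' r' eps' s' (Suc (Suc n)))"
    then obtain xs y where xs: "xs \<in> set_pmf (erws_steps p' q' r' eps' s' (Suc n))"
      and y: "y \<in> set_pmf (bind_pmf (pmf_of_set {0..<length xs}) (\<lambda>k. erws_next p' q' r' eps' (xs ! k)))"
      and ys: "ys = xs @ [y]"
      by auto
    have xL: "xs \<in> L (Suc n)" using 3 xs by auto
    hence len: "length xs = Suc n" and sx: "set xs \<subseteq> {-1,0,1}" by (auto simp: L_def)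
    have ne: "{0..<length xs} \<noteq> {}" using len by auto
    from y obtain k where k: "k < length xs" and yk: "y \<in> set_pmf (erws_next p' q' r' eps' (xs ! k))"
      using set_pmf_of_set[OF ne] by auto
    have "xs ! k \<in> {-1,0,1}" using sx k nth_mem by blast
    hence "y \<in> {-1,0,1}" using next_supp[OF "3.prems"] yk by blast
    thus "ys \<in> L (Suc (Suc n))" using ys len sx by (auto simp: L_def)
  qed
qed

definition D :: "real \<Rightarrow> real \<Rightarrow> real \<Rightarrow> real \<Rightarrow> int list \<Rightarrow> int pmf" where
  "D p q r eps xs = bind_pmf (pmf_of_set {0..<length xs}) (\<lambda>k. erws_next p q r eps (xs ! k))"

lemma D_fin:
  assumes "p \<ge> 0" "q \<ge> 0" "r \<ge> 0" "p+q+r = 1" "0 \<le> eps" "eps \<le> 1" "xs \<noteq> []"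
  shows "finite (set_pmf (D p q r eps xs))"
proof -
  have ne: "{0..<length xs} \<noteq> {}" using assms(7) by auto
  show ?thesis unfolding D_def using next_fin[OF assms(1-6)]
    by (simp add: set_pmf_of_set[OF ne])
qed

lemma D_exp:
  assumes "p \<ge> 0" "q \<ge> 0" "r \<ge> 0" "p+q+r = 1" "0 \<le> eps" "eps \<le> 1" "xs \<noteq> []"
  shows "measure_pmf.expectation (D p q r eps xs) (h :: int \<Rightarrow> real)
     = (\<Sum>k<length xs. measure_pmf.expectation (erws_next p q r eps (xs ! k)) h) / length xs"
proof -
  have ne: "{0..<length xs} \<noteq> {}" using assms(7) by auto
  have "measure_pmf.expectation (D p q r eps xs) h =
     (\<Sum>a\<in>{0..<length xs}. pmf (pmf_of_set {0..<length xs}) a *\<^sub>R measure_pmf.expectation (erws_next p q r eps (xs ! a)) h)"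
    unfolding D_def
    by (rule pmf_expectation_bind) (use next_fin[OF assms(1-6)] set_pmf_of_set[OF ne] in auto)
  also have "\<dots> = (\<Sum>a\<in>{0..<length xs}. measure_pmf.expectation (erws_next p q r eps (xs ! a)) h / length xs)"
    using ne by (intro sum.cong refl) auto
  also have "\<dots> = (\<Sum>k<length xs. measure_pmf.expectation (erws_next p q r eps (xs ! k)) h) / length xs"
    by (simp add: sum_divide_distrib atLeast0LessThan)
  finally show ?thesis .
qed

lemma exp_step:
  assumes "p \<ge> 0" "q \<ge> 0" "r \<ge> 0" "p+q+r = 1" "0 \<le> eps" "eps \<le> 1"
  shows "measure_pmf.expectation (erws_steps p q r eps s (Suc (Suc n))) (f :: int list \<Rightarrow> real) =
   measure_pmf.expectation (erws_steps p q r eps s (Suc n))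
     (\<lambda>xs. measure_pmf.expectation (D p q r eps xs) (\<lambda>y. f (xs @ [y])))"
proof -
  let ?M = "erws_steps p q r eps s (Suc n)"
  have e: "erws_steps p q r eps s (Suc (Suc n)) = bind_pmf ?M (\<lambda>xs. map_pmf (\<lambda>y. xs@[y]) (D p q r eps xs))"
    by (simp add: D_def)
  have "measure_pmf.expectation (erws_steps p q r eps s (Suc (Suc n))) f =
     (\<Sum>a\<in>L (Suc n). pmf ?M a *\<^sub>R measure_pmf.expectation (map_pmf (\<lambda>y. a@[y]) (D p q r eps a)) f)"
    unfolding e
  proof (rule pmf_expectation_bind[OF finite_L])
    fix a assume "a \<in> L (Suc n)"
    hence "a \<noteq> []" by (auto simp: L_def)
    thus "finite (set_pmf (map_pmf (\<lambda>y. a@[y]) (D p q r eps a)))"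
      using D_fin[OF assms] by simp
  qed (rule supp[OF assms])
  also have "\<dots> = (\<Sum>a\<in>L (Suc n). pmf ?M a *\<^sub>R measure_pmf.expectation (D p q r eps a) (\<lambda>y. f (a @ [y])))"
    by simp
  also have "\<dots> = measure_pmf.expectation ?M (\<lambda>xs. measure_pmf.expectation (D p q r eps xs) (\<lambda>y. f (xs @ [y])))"
    by (rule integral_measure_pmf[OF finite_L, symmetric]) (use supp[OF assms] in auto)
  finally show ?thesis .
qed

definition nz :: "int list \<Rightarrow> real" where
  "nz xs = (\<Sum>k<length xs. if xs ! k = 0 then 0 else 1)"

lemma nz_app: "nz (xs @ [y]) = nz xs + (if y = 0 then 0 else 1)"
  unfolding nz_def by (simp add: nth_append)

lemma sum_nth_of_int: "(\<Sum>k<length xs. real_of_int (xs ! k)) = real_of_int (sum_list xs)"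
  by (simp add: sum_list_sum_nth atLeast0LessThan)

lemma gsum: "(\<Sum>k<length xs. (if xs ! k = 0 then (eps::real) else 1 - r)) = eps * length xs + (1 - r - eps) * nz xs"
proof -
  have "(\<Sum>k<length xs. (if xs ! k = 0 then eps else 1 - r)) =
        (\<Sum>k<length xs. eps + (1 - r - eps) * (if xs ! k = 0 then 0 else 1))"
    by (intro sum.cong) auto
  also have "\<dots> = eps * length xs + (1 - r - eps) * nz xs"
    by (simp add: sum.distrib sum_distrib_left nz_def)
  finally show ?thesis .
qed

lemma next_sq:
  assumes "p \<ge> 0" "q \<ge> 0" "r \<ge> 0" "p+q+r = 1" "0 \<le> eps" "eps \<le> 1" "c \<in> {-1,0,1}"
  shows "measure_pmf.expectation (erws_next p q r eps c) (\<lambda>y. (S + real_of_int y)\<^sup>2)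
     = S\<^sup>2 + 2 * (p - q) * S * real_of_int c + (if c = 0 then eps else 1 - r)"
proof -
  have r: "r = 1 - p - q" using assms(4) by simp
  consider "c = 0" | "c = 1" | "c = -1" using assms(7) by auto
  then show ?thesis
  proof cases
    case 1 then show ?thesis by (simp add: next_exp0[OF assms(5,6)] power2_eq_square algebra_simps; simp add: field_simps)
  next
    case 2
    have e: "measure_pmf.expectation (erws_next p q r eps c) (\<lambda>y. (S + real_of_int y)\<^sup>2) = p*(S+1)\<^sup>2 + q*(S-1)\<^sup>2 + r*S\<^sup>2"
      using next_exp1[OF assms(1-4), of c eps "\<lambda>y. (S + real_of_int y)\<^sup>2"] 2 by simp
    show ?thesis unfolding e using 2 by (simp add: r power2_eq_square algebra_simps)
  next
    case 3
    have e: "measure_pmf.expectation (erws_next p q r eps c) (\<lambda>y. (S + real_of_int y)\<^sup>2) = p*(S-1)\<^sup>2 + q*(S+1)\<^sup>2 + r*S\<^sup>2"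
      using next_exp1[OF assms(1-4), of c eps "\<lambda>y. (S + real_of_int y)\<^sup>2"] 3 by simp
    show ?thesis unfolding e using 3 by (simp add: r power2_eq_square algebra_simps)
  qed
qed

lemma next_nz:
  assumes "p \<ge> 0" "q \<ge> 0" "r \<ge> 0" "p+q+r = 1" "0 \<le> eps" "eps \<le> 1" "c \<in> {-1,0,1}"
  shows "measure_pmf.expectation (erws_next p q r eps c) (\<lambda>y. A + (if y = 0 then 0 else 1))
     = A + (if c = 0 then eps else 1 - r)"
proof -
  have r: "r = 1 - p - q" using assms(4) by simp
  consider "c = 0" | "c = 1" | "c = -1" using assms(7) by auto
  then show ?thesis
  proof cases
    case 1 then show ?thesis by (simp add: next_exp0[OF assms(5,6)] algebra_simps; simp add: field_simps)
  next
    case 2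
    have e: "measure_pmf.expectation (erws_next p q r eps c) (\<lambda>y. A + (if y = 0 then 0 else 1)) = p*(A+1) + q*(A+1) + r*A"
      using next_exp1[OF assms(1-4), of c eps "\<lambda>y. A + (if y = 0 then 0 else 1)"] 2 by simp
    show ?thesis unfolding e using 2 by (simp add: r algebra_simps)
  next
    case 3
    have e: "measure_pmf.expectation (erws_next p q r eps c) (\<lambda>y. A + (if y = 0 then 0 else 1)) = p*(A+1) + q*(A+1) + r*A"
      using next_exp1[OF assms(1-4), of c eps "\<lambda>y. A + (if y = 0 then 0 else 1)"] 3 by simp
    show ?thesis unfolding e using 3 by (simp add: r algebra_simps)
  qed
qed

lemma alg1: "(x::real) > 0 \<Longrightarrow> (x*S\<^sup>2 + 2*(p-q)*S*S + G)/x = S\<^sup>2*(1+2*(p-q)/x) + G/x"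
  by (simp add: field_simps power2_eq_square)

lemma D_sq:
  assumes "p \<ge> 0" "q \<ge> 0" "r \<ge> 0" "p+q+r = 1" "0 \<le> eps" "eps \<le> 1" "xs \<in> L (Suc n)"
  shows "measure_pmf.expectation (D p q r eps xs) (\<lambda>y. (real_of_int (sum_list (xs @ [y])))\<^sup>2)
     = (real_of_int (sum_list xs))\<^sup>2 * (1 + 2 * (p - q) / Suc n) + (eps * Suc n + (1 - r - eps) * nz xs) / Suc n"
proof -
  let ?S = "real_of_int (sum_list xs)"
  have len: "length xs = Suc n" and sx: "set xs \<subseteq> {-1,0,1}" using assms(7) by (auto simp: L_def)
  have ne: "xs \<noteq> []" using len by auto
  have "measure_pmf.expectation (D p q r eps xs) (\<lambda>y. (real_of_int (sum_list (xs @ [y])))\<^sup>2)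
     = measure_pmf.expectation (D p q r eps xs) (\<lambda>y. (?S + real_of_int y)\<^sup>2)" by simp
  also have "\<dots> = (\<Sum>k<length xs. measure_pmf.expectation (erws_next p q r eps (xs ! k)) (\<lambda>y. (?S + real_of_int y)\<^sup>2)) / length xs"
    by (rule D_exp[OF assms(1-6) ne])
  also have "\<dots> = (\<Sum>k<length xs. ?S\<^sup>2 + 2 * (p - q) * ?S * real_of_int (xs ! k) + (if xs ! k = 0 then eps else 1 - r)) / length xs"
    using sx by (intro arg_cong2[where f="(/)"] sum.cong refl next_sq[OF assms(1-6)]) (auto dest: nth_mem)
  also have "\<dots> = (length xs * ?S\<^sup>2 + 2 * (p - q) * ?S * ?S + (eps * length xs + (1 - r - eps) * nz xs)) / length xs"
  proof -
    have "(\<Sum>k<length xs. ?S\<^sup>2 + 2 * (p - q) * ?S * real_of_int (xs ! k) + (if xs ! k = 0 then eps else 1 - r))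
      = (\<Sum>k<length xs. ?S\<^sup>2) + (2 * (p - q) * ?S) * (\<Sum>k<length xs. real_of_int (xs ! k)) + (\<Sum>k<length xs. (if xs ! k = 0 then eps else 1 - r))"
      by (simp add: sum.distrib sum_distrib_left)
    thus ?thesis by (simp only: gsum sum_nth_of_int) simp
  qed
  also have "\<dots> = ?S\<^sup>2 * (1 + 2 * (p - q) / Suc n) + (eps * Suc n + (1 - r - eps) * nz xs) / Suc n"
    unfolding len[symmetric] by (rule alg1) (use ne in simp)
  finally show ?thesis .
qed

lemma D_nz:
  assumes "p \<ge> 0" "q \<ge> 0" "r \<ge> 0" "p+q+r = 1" "0 \<le> eps" "eps \<le> 1" "xs \<in> L (Suc n)"
  shows "measure_pmf.expectation (D p q r eps xs) (\<lambda>y. nz (xs @ [y]))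
     = nz xs + (eps * Suc n + (1 - r - eps) * nz xs) / Suc n"
proof -
  have len: "length xs = Suc n" and sx: "set xs \<subseteq> {-1,0,1}" using assms(7) by (auto simp: L_def)
  have ne: "xs \<noteq> []" using len by auto
  have "measure_pmf.expectation (D p q r eps xs) (\<lambda>y. nz (xs @ [y]))
     = measure_pmf.expectation (D p q r eps xs) (\<lambda>y. nz xs + (if y = 0 then 0 else 1))" by (simp add: nz_app)
  also have "\<dots> = (\<Sum>k<length xs. measure_pmf.expectation (erws_next p q r eps (xs ! k)) (\<lambda>y. nz xs + (if y = 0 then 0 else 1))) / length xs"
    by (rule D_exp[OF assms(1-6) ne])
  also have "\<dots> = (\<Sum>k<length xs. nz xs + (if xs ! k = 0 then eps else 1 - r)) / length xs"
    using sx by (intro arg_cong2[where f="(/)"] sum.cong refl next_nz[OF assms(1-6)]) (auto dest: nth_mem)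
  also have "\<dots> = (length xs * nz xs + (eps * length xs + (1 - r - eps) * nz xs)) / length xs"
    by (simp add: sum.distrib gsum)
  also have "\<dots> = nz xs + (eps * Suc n + (1 - r - eps) * nz xs) / Suc n"
    unfolding len by (simp add: field_simps)
  finally show ?thesis .
qed

definition W :: "real \<Rightarrow> real \<Rightarrow> real \<Rightarrow> real \<Rightarrow> real \<Rightarrow> nat \<Rightarrow> real" where
  "W p q r eps s t = measure_pmf.expectation (erws_steps p q r eps s t) nz"

lemma fin_steps:
  assumes "p \<ge> 0" "q \<ge> 0" "r \<ge> 0" "p+q+r = 1" "0 \<le> eps" "eps \<le> 1"
  shows "finite (set_pmf (erws_steps p q r eps s n))"
  using supp[OF assms] finite_L finite_subset by blast

lemma m_rec:
  assumes "p \<ge> 0" "q \<ge> 0" "r \<ge> 0" "p+q+r = 1" "0 \<le> eps" "eps \<le> 1"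
  shows "erws_second_moment p q r eps s (Suc (Suc n)) =
     erws_second_moment p q r eps s (Suc n) * (1 + 2 * (p - q) / Suc n)
     + eps + (1 - r - eps) / Suc n * W p q r eps s (Suc n)"
proof -
  let ?M = "erws_steps p q r eps s (Suc n)"
  have I: "integrable (measure_pmf ?M) f" for f :: "int list \<Rightarrow> real"
    by (rule integrable_measure_pmf_finite[OF fin_steps[OF assms]])
  have "erws_second_moment p q r eps s (Suc (Suc n)) =
     measure_pmf.expectation ?M (\<lambda>xs. measure_pmf.expectation (D p q r eps xs) (\<lambda>y. (real_of_int (sum_list (xs @ [y])))\<^sup>2))"
    unfolding erws_second_moment_def by (rule exp_step[OF assms])
  also have "\<dots> = measure_pmf.expectation ?M (\<lambda>xs. (real_of_int (sum_list xs))\<^sup>2 * (1 + 2 * (p - q) / Suc n) + (eps + (1 - r - eps) / Suc n * nz xs))"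
  proof (intro integral_cong_AE)
    show "AE x in measure_pmf ?M. measure_pmf.expectation (D p q r eps x) (\<lambda>y. (real_of_int (sum_list (x @ [y])))\<^sup>2) =
        (real_of_int (sum_list x))\<^sup>2 * (1 + 2 * (p - q) / Suc n) + (eps + (1 - r - eps) / Suc n * nz x)"
      unfolding AE_measure_pmf_iff
    proof
      fix x assume "x \<in> set_pmf ?M"
      hence "x \<in> L (Suc n)" using supp[OF assms] by blast
      thus "measure_pmf.expectation (D p q r eps x) (\<lambda>y. (real_of_int (sum_list (x @ [y])))\<^sup>2) =
        (real_of_int (sum_list x))\<^sup>2 * (1 + 2 * (p - q) / Suc n) + (eps + (1 - r - eps) / Suc n * nz x)"
        using D_sq[OF assms] by (simp add: add_divide_distrib)
    qed
  qed simp_all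
  also have "\<dots> = erws_second_moment p q r eps s (Suc n) * (1 + 2 * (p - q) / Suc n)
     + eps + (1 - r - eps) / Suc n * W p q r eps s (Suc n)"
    unfolding erws_second_moment_def W_def
    by (simp add: I integral_add)
  finally show ?thesis .
qed

lemma w_rec:
  assumes "p \<ge> 0" "q \<ge> 0" "r \<ge> 0" "p+q+r = 1" "0 \<le> eps" "eps \<le> 1"
  shows "W p q r eps s (Suc (Suc n)) =
     W p q r eps s (Suc n) * (1 + (1 - r - eps) / Suc n) + eps"
proof -
  let ?M = "erws_steps p q r eps s (Suc n)"
  have I: "integrable (measure_pmf ?M) f" for f :: "int list \<Rightarrow> real"
    by (rule integrable_measure_pmf_finite[OF fin_steps[OF assms]])
  have "W p q r eps s (Suc (Suc n)) =
     measure_pmf.expectation ?M (\<lambda>xs. measure_pmf.expectation (D p q r eps xs) (\<lambda>y. nz (xs @ [y])))"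
    unfolding W_def by (rule exp_step[OF assms])
  also have "\<dots> = measure_pmf.expectation ?M (\<lambda>xs. nz xs * (1 + (1 - r - eps) / Suc n) + eps)"
  proof (intro integral_cong_AE)
    show "AE x in measure_pmf ?M. measure_pmf.expectation (D p q r eps x) (\<lambda>y. nz (x @ [y])) =
        nz x * (1 + (1 - r - eps) / Suc n) + eps"
      unfolding AE_measure_pmf_iff
    proof
      fix x assume "x \<in> set_pmf ?M"
      hence "x \<in> L (Suc n)" using supp[OF assms] by blast
      thus "measure_pmf.expectation (D p q r eps x) (\<lambda>y. nz (x @ [y])) = nz x * (1 + (1 - r - eps) / Suc n) + eps"
        using D_nz[OF assms] by (simp add: field_simps)
    qed
  qed simp_all
  also have "\<dots> = W p q r eps s (Suc n) * (1 + (1 - r - eps) / Suc n) + eps"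
    unfolding W_def by (simp add: I integral_add)
  finally show ?thesis .
qed

lemma base:
  assumes "0 \<le> s" "s \<le> 1"
  shows "erws_second_moment p q r eps s (Suc 0) = 1" "W p q r eps s (Suc 0) = 1"
proof -
  have a: "(\<lambda>x::bool. (real_of_int (if x then 1 else - 1))\<^sup>2) = (\<lambda>_. 1)" by (auto simp: fun_eq_iff)
  have b: "(\<lambda>x::bool. if (if x then 1 else - 1::int) = 0 then 0 else 1::real) = (\<lambda>_. 1)" by (auto simp: fun_eq_iff)
  show "erws_second_moment p q r eps s (Suc 0) = 1" "W p q r eps s (Suc 0) = 1"
    unfolding erws_second_moment_def W_def by (simp_all add: nz_def a b)
qed


lemma partA: assumes "(t::real) \<noteq> 0" "d \<noteq> 0" and hc: "c = 1 + b - d"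
  shows "- u*(t+c)/(d*t) = -u/d*(1+(1+b)/t) + u/t"
  unfolding hc using assms(1,2) by (simp add: field_simps)
lemma partL: assumes "(t::real) \<noteq> 0" "r \<noteq> 0" "a \<noteq> 0" and ha: "a = eps + r" and hc: "c = 1 - a"
  shows "-(t+1)/(r*a) = -t/(r*a)*(1+(1+eps*r)/t) + eps + c/t*(eps*t/a)"
proof -
  have e: "eps = a - r" using ha by simp
  show ?thesis unfolding hc e using assms(1-3) by (simp add: field_simps)
qed
lemma alg_m:
  fixes x GA GB GT G1 G2 K eps r :: real
  assumes x: "x > 0" and GT: "GT \<noteq> 0" and G1: "G1 \<noteq> 0" and r: "r \<noteq> 0" and a: "eps + r \<noteq> 0"
    and c: "1 - eps - r \<noteq> 0" and d: "eps + r + eps * r \<noteq> 0"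
  shows "- (x+1)/(r*(eps+r)) - r*((x + (1-eps-r))*GA)/((eps+r)*(eps+r+eps*r)*G1*(x*GT)) + 1/G2*K*((x+1+eps*r)*GB)/(x*GT)
   = (- x/(r*(eps+r)) - r*GA/((eps+r)*(eps+r+eps*r)*G1*GT) + 1/G2*K*GB/GT)*(1+(1+eps*r)/x) + eps
     + (1-r-eps)/x*(eps*x/(eps+r) + r/((eps+r)*(1-eps-r)*G1)*GA/GT)"
proof -
  define P where "P = 1+(1+eps*r)/x"
  define u where "u = r*GA/((eps+r)*G1*GT)"
  have L: "-(x+1)/(r*(eps+r)) = -x/(r*(eps+r))*P + eps + (1-r-eps)/x*(eps*x/(eps+r))"
    unfolding P_def by (rule partL) (use x r a in auto)
  have A1: "r*((x + (1-eps-r))*GA)/((eps+r)*(eps+r+eps*r)*G1*(x*GT)) = u*(x+(1-eps-r))/((eps+r+eps*r)*x)"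
    unfolding u_def using x GT G1 a d by (simp add: field_simps)
  have A2: "r*GA/((eps+r)*(eps+r+eps*r)*G1*GT) = u/(eps+r+eps*r)"
    unfolding u_def using x GT G1 a d by (simp add: field_simps)
  have A3: "(1-r-eps)/x*(r/((eps+r)*(1-eps-r)*G1)*GA/GT) = u/x"
  proof -
    have gen: "cc/x*(r/(aa*cc*G1)*GA/GT) = (r*GA/(aa*G1*GT))/x" if "cc \<noteq> 0" for cc aa
      using that by (simp add: field_simps)
    have e: "1 - r - eps = 1 - eps - r" by simp
    show ?thesis unfolding u_def by (subst e) (rule gen[OF c])
  qed
  have A: "-u*(x+(1-eps-r))/((eps+r+eps*r)*x) = -u/(eps+r+eps*r)*P + u/x"
    unfolding P_def by (rule partA) (use x d in auto)
  have B: "1/G2*K*((x+1+eps*r)*GB)/(x*GT) = 1/G2*K*GB/GT*P"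
    unfolding P_def using x GT by (simp add: field_simps)
  have "- (x+1)/(r*(eps+r)) - r*((x + (1-eps-r))*GA)/((eps+r)*(eps+r+eps*r)*G1*(x*GT)) + 1/G2*K*((x+1+eps*r)*GB)/(x*GT)
     = (-x/(r*(eps+r))*P + eps + (1-r-eps)/x*(eps*x/(eps+r))) + (-u/(eps+r+eps*r)*P + u/x) + 1/G2*K*GB/GT*P"
    using L A1 A B by (metis (no_types, lifting) diff_conv_add_uminus minus_divide_left mult_minus_left)
  also have "\<dots> = (- x/(r*(eps+r)) - u/(eps+r+eps*r) + 1/G2*K*GB/GT)*P + eps
     + ((1-r-eps)/x*(eps*x/(eps+r)) + u/x)"
    by (simp add: algebra_simps)
  also have "\<dots> = (- x/(r*(eps+r)) - r*GA/((eps+r)*(eps+r+eps*r)*G1*GT) + 1/G2*K*GB/GT)*P + eps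
     + (1-r-eps)/x*(eps*x/(eps+r) + r/((eps+r)*(1-eps-r)*G1)*GA/GT)"
  proof -
    have D: "(1-r-eps)/x*(eps*x/(eps+r) + r/((eps+r)*(1-eps-r)*G1)*GA/GT) = (1-r-eps)/x*(eps*x/(eps+r)) + u/x"
      by (subst distrib_left) (simp only: A3)
    show ?thesis unfolding D A2 ..
  qed
  finally show ?thesis unfolding P_def .
qed
lemma genw: fixes x aa cc eps r G1 GA GT :: real
  assumes "aa \<noteq> 0" "x \<noteq> 0" "cc \<noteq> 0" "G1 \<noteq> 0" "GT \<noteq> 0" and s: "aa + cc = 1"
  shows "eps*(x+1)/aa + r/(aa*cc*G1)*((x+cc)*GA)/(x*GT) = (eps*x/aa + r/(aa*cc*G1)*GA/GT)*(1+cc/x) + eps"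
proof -
  have c: "cc = 1 - aa" using s by simp
  show ?thesis using assms(1-5) unfolding c by (simp add: field_simps)
qed

lemma alg_w:
  fixes x GA GT G1 eps r :: real
  assumes x: "x > 0" and GT: "GT \<noteq> 0" and G1: "G1 \<noteq> 0" and a: "eps + r \<noteq> 0"
    and c: "1 - eps - r \<noteq> 0"
  shows "eps*(x+1)/(eps+r) + r/((eps+r)*(1-eps-r)*G1)*((x + (1-eps-r))*GA)/(x*GT)
    = (eps*x/(eps+r) + r/((eps+r)*(1-eps-r)*G1)*GA/GT) * (1 + (1-r-eps)/x) + eps"
proof -
  have e: "1 - r - eps = 1 - eps - r" by simp
  show ?thesis unfolding e by (rule genw) (use assms in auto)
qed

lemma gamma_ratio:
  fixes z :: real assumes z: "z \<notin> \<int>\<^sub>\<le>\<^sub>0"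
  shows "(\<lambda>n. Gamma (real n + 1 + z) / (Gamma (real n) * real n powr (1 + z))) \<longlonglongrightarrow> 1"
proof -
  have G: "Gamma z \<noteq> 0" using z Gamma_eq_zero_iff by auto
  have lim: "(\<lambda>n. Gamma z / Gamma_series z n) \<longlonglongrightarrow> Gamma z / Gamma z"
    by (intro tendsto_divide tendsto_const Gamma_series_LIMSEQ G)
  have ev: "eventually (\<lambda>n. Gamma z / Gamma_series z n = Gamma (real n + 1 + z) / (Gamma (real n) * real n powr (1 + z))) sequentially"
    using eventually_gt_at_top[of "0::nat"]
  proof eventually_elim
    fix n :: nat assume n: "n > 0"
    have p: "pochhammer z (n+1) = Gamma (z + real (n+1)) / Gamma z" using pochhammer_Gamma[OF z] by simp
    have nz: "Gamma (z + real (n+1)) \<noteq> 0"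
    proof
      assume "Gamma (z + real (n+1)) = 0"
      hence "z + real (n+1) \<in> \<int>\<^sub>\<le>\<^sub>0" using Gamma_eq_zero_iff by blast
      then obtain k where "z + real (n+1) = - real k" by (auto elim!: nonpos_Ints_cases')
      hence "z = - real (k + n + 1)" by simp
      thus False using z minus_of_nat_in_nonpos_Ints[of "k + n + 1", where 'a=real] by simp
    qed
    have np: "real n \<notin> \<int>\<^sub>\<le>\<^sub>0" using n by (auto simp: of_nat_in_nonpos_Ints_iff)
    have f: "Gamma (real n) * real n = fact n"
      using Gamma_plus1[OF np] Gamma_fact[of n, where 'a=real] by (simp add: add.commute mult.commute)
    have e: "exp (z * of_real (ln (of_nat n))) = real n powr z" using n by (simp add: powr_def mult.commute)
    have pw: "real n powr (1+z) = real n * real n powr z" using n by (simp add: powr_add)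
    have gs: "Gamma_series z n = fact n * real n powr z * Gamma z / Gamma (z + real (n+1))"
      unfolding Gamma_series_def p e using G nz by (simp add: field_simps)
    have a: "real n + 1 + z = z + real (n+1)" by simp
    show "Gamma z / Gamma_series z n = Gamma (real n + 1 + z) / (Gamma (real n) * real n powr (1 + z))"
      unfolding gs a pw mult.assoc[symmetric] f using G nz n by (simp add: field_simps)
  qed
  show ?thesis using Lim_transform_eventually[OF lim ev] G by simp
qed


lemma base_m_gen:
  fixes aa dd G1 G2 eps r :: real
  assumes "G1 \<noteq> 0" "G2 \<noteq> 0" "r \<noteq> 0" "aa \<noteq> 0" "dd \<noteq> 0" and ha: "aa = eps + r" and hd: "dd = aa + eps * r"
  shows "- 1 / (r * aa) - r * ((1 - eps - r) * G1) / (aa * dd * G1 * 1)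
     + 1 / G2 * (1 / (r * aa) + r / (aa * dd)) * ((1 + eps * r) * G2) / 1 = 1"
proof -
  have e: "eps = aa - r" using ha by simp
  have "- 1 / (r * aa) - r * ((1 - eps - r) * G1) / (aa * dd * G1 * 1)
     + 1 / G2 * (1 / (r * aa) + r / (aa * dd)) * ((1 + eps * r) * G2) / 1
     = (eps * r) / (r * aa) + r * (1 + eps * r - (1 - eps - r)) / (aa * dd)"
    using assms(1-5) by (simp add: field_simps)
  also have "1 + eps * r - (1 - eps - r) = dd" using ha hd by simp
  also have "(eps * r) / (r * aa) + r * dd / (aa * dd) = 1"
    using assms(3-5) unfolding e by (simp add: field_simps)
  finally show ?thesis .
qed
lemma base_w_gen:
  fixes aa G1 eps r :: real
  assumes "G1 \<noteq> 0" "aa \<noteq> 0" "cc \<noteq> 0" and ha: "aa = eps + r"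
  shows "eps * 1 / aa + r / (aa * cc * G1) * (cc * G1) / 1 = 1"
proof -
  have e: "eps = aa - r" using ha by simp
  show ?thesis using assms(1-3) unfolding e by (simp add: field_simps)
qed

lemma final_alg:
  fixes x E F GT GA GB r a d G1 G2 K :: real
  assumes "x \<noteq> 0" "E \<noteq> 0" "F \<noteq> 0" "GT \<noteq> 0"
  shows "(- x/(r*a) - r*GA/(a*d*G1*GT) + 1/G2*K*GB/GT)/(x*E)
    = -(1/(r*a))*(1/E) - r/(a*d*G1)*((GA/(GT*(x*F)))*(F/E)) + 1/G2*K*(GB/(GT*(x*E)))"
  using assms by (simp add: field_simps)

lemma notnp_pos: "(z::real) > 0 \<Longrightarrow> z \<notin> \<int>\<^sub>\<le>\<^sub>0"
  by auto

lemma notnp_m1: assumes "(z::real) > -1" "z \<noteq> 0" shows "z \<notin> \<int>\<^sub>\<le>\<^sub>0"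
proof
  assume "z \<in> \<int>\<^sub>\<le>\<^sub>0"
  then obtain k where k: "z = - real k" by (auto elim!: nonpos_Ints_cases')
  show False
  proof (cases k)
    case 0 then show False using k assms by simp
  next
    case (Suc j) then show False using k assms by simp
  qed
qed

lemma notnp_m2: assumes "(z::real) > -2" "z < 0" "z \<noteq> -1" shows "z \<notin> \<int>\<^sub>\<le>\<^sub>0"
proof
  assume "z \<in> \<int>\<^sub>\<le>\<^sub>0"
  then obtain k where k: "z = - real k" by (auto elim!: nonpos_Ints_cases')
  have "k < 2" "k > 0" using k assms by auto
  hence "k = 1" by auto
  thus False using k assms by simp
qed

theorem mainTheorem9:
  fixes p q r eps s :: real
  assumes "0 < p" "p < 1" "0 < q" "q < 1" "0 < r" "r < 1" "p + q + r = 1"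
    and "0 < eps" "eps < 1" "0 < s" "s < 1"
    and "eps + r \<noteq> 1"
    and "p - q = (1 + eps * r) / 2"
  shows "(\<forall>t::nat. t \<ge> 1 \<longrightarrow>
           erws_second_moment p q r eps s t =
             - real t / (r * (eps + r))
             - r * Gamma (real t + 1 - eps - r)
                 / ((eps + r) * (eps + r + eps * r) * Gamma (1 - eps - r) * Gamma (real t))
             + 1 / Gamma (1 + eps * r)
                 * (1 / (r * (eps + r)) + r / ((eps + r) * (eps + r + eps * r)))
                 * Gamma (real t + 1 + eps * r) / Gamma (real t))
       \<and> ((\<lambda>t::nat. erws_second_moment p q r eps s t / real t powr (1 + eps * r))
           \<longlonglongrightarrow> 1 / Gamma (1 + eps * r)
                 * (1 / (r * (eps + r)) + r / ((eps + r) * (eps + r + eps * r))))"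
proof -
  have P: "p \<ge> 0" "q \<ge> 0" "r \<ge> 0" "p+q+r = 1" "0 \<le> eps" "eps \<le> 1"
    using assms by auto
  define K where "K = (1 / (r * (eps + r)) + r / ((eps + r) * (eps + r + eps * r)))"
  define Fm where "Fm x = - x / (r * (eps + r))
             - r * Gamma (x + 1 - eps - r)
                 / ((eps + r) * (eps + r + eps * r) * Gamma (1 - eps - r) * Gamma x)
             + 1 / Gamma (1 + eps * r) * K * Gamma (x + 1 + eps * r) / Gamma x" for x
  define Gw where "Gw x = eps*x/(eps+r) + r/((eps+r)*(1-eps-r)*Gamma (1-eps-r))*Gamma (x + 1 - eps - r)/Gamma x" for x
  have pq: "2 * (p - q) = 1 + eps * r" using assms(13) by simp
  have G1: "Gamma (1 - eps - r) \<noteq> 0"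
  proof -
    have "1 - eps - r \<notin> \<int>\<^sub>\<le>\<^sub>0" by (rule notnp_m1) (use assms in auto)
    thus ?thesis by (simp add: Gamma_eq_zero_iff)
  qed
  have b: "eps * r > 0" using assms by simp
  have G2: "Gamma (1 + eps * r) \<noteq> 0"
  proof -
    have "Gamma (1 + eps * r) > 0" by (rule Gamma_real_pos) (use b in simp)
    thus ?thesis by simp
  qed
  have ra1: "r \<noteq> 0" using assms by simp
  have ra2: "eps + r \<noteq> 0" using assms by simp
  have ra3: "1 - eps - r \<noteq> 0" using assms by simp
  have ra4: "eps + r + eps * r \<noteq> 0" using assms b by linarith
  note ra = ra1 ra2 ra3 ra4
  have key: "erws_second_moment p q r eps s (Suc n) = Fm (real (Suc n)) \<and> W p q r eps s (Suc n) = Gw (real (Suc n))" for n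
  proof (induction n)
    case 0
    have g1: "Gamma (1 + 1 - eps - r) = (1 - eps - r) * Gamma (1 - eps - r)"
      using Gamma_plus1[OF notnp_m1[of "1 - eps - r"]] assms by (simp add: algebra_simps)
    have g2: "Gamma (1 + 1 + eps * r) = (1 + eps * r) * Gamma (1 + eps * r)"
      using Gamma_plus1[OF notnp_pos[of "1 + eps * r"]] assms b by (simp add: algebra_simps)
    have "Fm 1 = 1"
      unfolding Fm_def g1 g2 K_def Gamma_1
      by (rule base_m_gen[where aa="eps+r" and dd="eps+r+eps*r"]) (use G1 G2 ra in auto)
    moreover have "Gw 1 = 1"
      unfolding Gw_def g1 Gamma_1
      by (rule base_w_gen[where aa="eps+r"]) (use G1 G2 ra in auto)
    ultimately show ?case using base[of s p q r eps] assms by simp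
  next
    case (Suc n)
    define x where "x = real (Suc n)"
    have x: "x > 0" "x \<ge> 1" unfolding x_def by auto
    have xs: "real (Suc (Suc n)) = x + 1" unfolding x_def by simp
    have GT: "Gamma x \<noteq> 0" using Gamma_real_pos[OF x(1)] by simp
    have gT: "Gamma (x + 1) = x * Gamma x" using Gamma_plus1[OF notnp_pos[OF x(1)]] .
    have gA: "Gamma (x + 1 + 1 - eps - r) = (x + (1 - eps - r)) * Gamma (x + 1 - eps - r)"
      using Gamma_plus1[OF notnp_pos[of "x + 1 - eps - r"]] assms x by (simp add: algebra_simps)
    have gB: "Gamma (x + 1 + 1 + eps * r) = (x + 1 + eps * r) * Gamma (x + 1 + eps * r)"
      using Gamma_plus1[OF notnp_pos[of "x + 1 + eps * r"]] assms x b by (simp add: algebra_simps)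
    have "erws_second_moment p q r eps s (Suc (Suc n)) = Fm x * (1 + (1 + eps * r) / x) + eps + (1 - r - eps) / x * Gw x"
      using m_rec[OF P, of s n] Suc pq unfolding x_def by simp
    also have "\<dots> = Fm (x + 1)"
      unfolding Fm_def Gw_def gA gB gT by (rule alg_m[symmetric]) (use x GT G1 ra in auto)
    finally have m: "erws_second_moment p q r eps s (Suc (Suc n)) = Fm (real (Suc (Suc n)))" unfolding xs .
    have "W p q r eps s (Suc (Suc n)) = Gw x * (1 + (1 - r - eps) / x) + eps"
      using w_rec[OF P, of s n] Suc unfolding x_def by simp
    also have "\<dots> = Gw (x + 1)"
      unfolding Gw_def gA gT by (rule alg_w[symmetric]) (use x GT G1 ra in auto)
    finally have w: "W p q r eps s (Suc (Suc n)) = Gw (real (Suc (Suc n)))" unfolding xs .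
    show ?case using m w by simp
  qed
  have mt: "erws_second_moment p q r eps s t = Fm (real t)" if t1: "t \<ge> 1" for t
  proof -
    obtain n where "t = Suc n" using t1 by (cases t) auto
    thus ?thesis using key[of n] by simp
  qed
  have part1: "\<forall>t::nat. t \<ge> 1 \<longrightarrow>
           erws_second_moment p q r eps s t =
             - real t / (r * (eps + r))
             - r * Gamma (real t + 1 - eps - r)
                 / ((eps + r) * (eps + r + eps * r) * Gamma (1 - eps - r) * Gamma (real t))
             + 1 / Gamma (1 + eps * r)
                 * (1 / (r * (eps + r)) + r / ((eps + r) * (eps + r + eps * r)))
                 * Gamma (real t + 1 + eps * r) / Gamma (real t)"
    using mt unfolding Fm_def K_def by blast
  define R1 where "R1 t = Gamma (real t + 1 + (-(eps+r))) / (Gamma (real t) * real t powr (1 + (-(eps+r))))" for t :: nat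
  define R2 where "R2 t = Gamma (real t + 1 + eps*r) / (Gamma (real t) * real t powr (1 + eps*r))" for t :: nat
  have R1: "R1 \<longlonglongrightarrow> 1" unfolding R1_def
    by (rule gamma_ratio, rule notnp_m2) (use assms in auto)
  have R2: "R2 \<longlonglongrightarrow> 1" unfolding R2_def
    by (rule gamma_ratio, rule notnp_pos) (use b in auto)
  have lim: "(\<lambda>t. -(1/(r*(eps+r))) * real t powr (-(eps*r))
      - r/((eps+r)*(eps+r+eps*r)*Gamma (1-eps-r)) * (R1 t * real t powr (-(eps+r) - eps*r))
      + 1/Gamma (1+eps*r)*K * R2 t)
     \<longlonglongrightarrow> -(1/(r*(eps+r))) * 0 - r/((eps+r)*(eps+r+eps*r)*Gamma (1-eps-r)) * (1 * 0) + 1/Gamma (1+eps*r)*K * 1"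
  proof -
    have n1: "-(eps*r) < 0" using b by linarith
    have n2: "-(eps+r) - eps*r < 0" using b assms by linarith
    show ?thesis by (intro tendsto_intros R1 R2 tendsto_neg_powr[OF n1] tendsto_neg_powr[OF n2] filterlim_real_sequentially)
  qed
  have ev: "eventually (\<lambda>t. -(1/(r*(eps+r))) * real t powr (-(eps*r))
      - r/((eps+r)*(eps+r+eps*r)*Gamma (1-eps-r)) * (R1 t * real t powr (-(eps+r) - eps*r))
      + 1/Gamma (1+eps*r)*K * R2 t = erws_second_moment p q r eps s t / real t powr (1 + eps * r)) sequentially"
    using eventually_ge_at_top[of "1::nat"]
  proof eventually_elim
    fix t :: nat assume t: "t \<ge> 1"
    define x where "x = real t"
    have x: "x > 0" using t unfolding x_def by simp
    have GT: "Gamma x \<noteq> 0" using Gamma_real_pos[OF x] by simp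
    have p1: "x powr (1 + eps*r) = x * x powr (eps*r)" using x by (simp add: powr_add)
    have p2: "x powr (-(eps*r)) = 1 / x powr (eps*r)" using x by (simp add: powr_minus_divide)
    have p3: "x powr (1 + (-(eps+r))) = x * x powr (-(eps+r))" using x by (simp add: powr_add)
    have p4: "x powr (-(eps+r) - eps*r) = x powr (-(eps+r)) / x powr (eps*r)" using x by (simp add: powr_diff)
    have ga: "Gamma (x + 1 + (-(eps+r))) = Gamma (x + 1 - eps - r)" by (simp add: algebra_simps)
    have "erws_second_moment p q r eps s t / real t powr (1 + eps * r) = Fm x / (x * x powr (eps*r))"
      using mt[OF t] p1 unfolding x_def by simp
    also have "\<dots> = -(1/(r*(eps+r)))*(1/x powr (eps*r))
       - r/((eps+r)*(eps+r+eps*r)*Gamma (1-eps-r))*((Gamma (x + 1 - eps - r)/(Gamma x*(x*x powr (-(eps+r)))))*(x powr (-(eps+r))/x powr (eps*r)))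
       + 1/Gamma (1+eps*r)*K*(Gamma (x + 1 + eps*r)/(Gamma x*(x*x powr (eps*r))))"
      unfolding Fm_def by (rule final_alg) (use x GT in auto)
    also have "\<dots> = -(1/(r*(eps+r))) * real t powr (-(eps*r))
      - r/((eps+r)*(eps+r+eps*r)*Gamma (1-eps-r)) * (R1 t * real t powr (-(eps+r) - eps*r))
      + 1/Gamma (1+eps*r)*K * R2 t"
      unfolding R1_def R2_def x_def[symmetric] p1 p2 p3 p4 ga ..
    finally show "-(1/(r*(eps+r))) * real t powr (-(eps*r))
      - r/((eps+r)*(eps+r+eps*r)*Gamma (1-eps-r)) * (R1 t * real t powr (-(eps+r) - eps*r))
      + 1/Gamma (1+eps*r)*K * R2 t = erws_second_moment p q r eps s t / real t powr (1 + eps * r)" by simp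
  qed
  have part2: "(\<lambda>t::nat. erws_second_moment p q r eps s t / real t powr (1 + eps * r))
           \<longlonglongrightarrow> 1 / Gamma (1 + eps * r) * K"
    using Lim_transform_eventually[OF lim ev] by simp
  show ?thesis using part1 part2 unfolding K_def by blast
qed

end
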